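(* Let $(S,\mathcal{S})$ be a measurable space with $\Delta\in\mathcal{S}\otimes\mathcal{S}$, and let $\mathcal{R}\subseteq \mathcal{S}$ be a ring of sets with $\sigma(\mathcal{R})=\mathcal{S}$. If $\pi_{1},\pi_{2}: \Omega\to C(S)$ are two cr-sets satisfying $P(\pi_{1}\cap A\neq \emptyset)=P(\pi_{2}\cap A\neq \emptyset)$ for all $A\in\mathcal{R}$, and if $\pi_{1}$ is $\sigma$-finite on $\mathcal{R}$, then $P_{\pi_{1}}=P_{\pi_{2}}$.
   Context: $\Delta=\{(x,x)\mid x\in S\}$ is the diagonal of $S\times S$. $(\Omega,\mathcal{F},P)$ is a probability space. $C(S)$ denotes the set of all countable (finite or denumerable) subsets of $S$. For $A\subseteq S$, $N_A:C(S)\to\mathbb{N}_0\cup\{\infty\}$, $M\mapsto |A\cap M|$. $\mathcal{C}(\mathcal{S})$ is the smallest $\sigma$-field on $C(S)$ making all $N_A$, $A\in\mathcal{S}$, measurable. A cr-set is an $\mathcal{F}$-$\mathcal{C}(\mathcal{S})$ measurable map $\pi:\Omega\to C(S)$; $P_\pi$ denotes its law. A map $\tau:\Omega\to C(S)$ is $\sigma$-finite on $\mathcal{E}\subseteq\mathcal{S}$ if there are $A_n\in\mathcal{E}$, $n\in\mathbb{N}$, with $S=\bigcup_n A_n$ such that $|\tau(\omega)\cap A_n|<\infty$ for all $\omega\in\Omega$ and all $n$. *)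

theory Defs
  imports "HOL-Probability.Probability"
begin

definition cnt_sets :: "'a measure \<Rightarrow> 'a set set" where
  "cnt_sets M = {X. countable X \<and> X \<subseteq> space M}"

definition cnt_N :: "'a set \<Rightarrow> 'a set \<Rightarrow> enat" where
  "cnt_N A X = (if finite (A \<inter> X) then enat (card (A \<inter> X)) else \<infinity>)"

definition cr_space :: "'a measure \<Rightarrow> 'a set measure" where
  "cr_space M = sigma (cnt_sets M)
     {{X \<in> cnt_sets M. cnt_N A X \<in> B} | A B. A \<in> sets M}"

definition cr_sigma_finite_on :: "'a measure \<Rightarrow> 'b set \<Rightarrow> ('b \<Rightarrow> 'a set) \<Rightarrow> 'a set set \<Rightarrow> bool" where
  "cr_sigma_finite_on M \<Omega> \<tau> E \<longleftrightarrow>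
     (\<exists>An :: nat \<Rightarrow> 'a set. range An \<subseteq> E \<and> space M = (\<Union>n. An n) \<and>
        (\<forall>\<omega>\<in>\<Omega>. \<forall>n. finite (\<tau> \<omega> \<inter> An n)))"

end

theory Submission
  imports Defs
begin

lemma sigma_sets_countable_gen:
  assumes "D \<in> sigma_sets \<Omega> G"
  shows "\<exists>G0\<subseteq>G. countable G0 \<and> D \<in> sigma_sets \<Omega> G0"
  using assms
proof induction
  case (Basic a) then show ?case by (intro exI[of _ "{a}"]) auto
next
  case Empty then show ?case by (intro exI[of _ "{}"]) (auto intro: sigma_sets.Empty)
next
  case (Compl a)
  then obtain G0 where "G0 \<subseteq> G" "countable G0" "a \<in> sigma_sets \<Omega> G0" by blast
  then show ?case by (intro exI[of _ G0]) (auto intro: sigma_sets.Compl)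
next
  case (Union a)
  then obtain G0 where G0: "\<And>i. G0 i \<subseteq> G \<and> countable (G0 i) \<and> a i \<in> sigma_sets \<Omega> (G0 i)"
    by metis
  have "a i \<in> sigma_sets \<Omega> (\<Union>i. G0 i)" for i
  proof -
    have "G0 i \<subseteq> (\<Union>i. G0 i)" by auto
    then show ?thesis using G0[of i] sigma_sets_mono' by blast
  qed
  then have "(\<Union>i. a i) \<in> sigma_sets \<Omega> (\<Union>i. G0 i)" by (rule sigma_sets.Union)
  then show ?case using G0 by (intro exI[of _ "\<Union>i. G0 i"]) auto
qed

lemma sigma_sets_sep:
  assumes "D \<in> sigma_sets \<Omega> S" "x \<in> \<Omega>" "y \<in> \<Omega>" "\<forall>s\<in>S. (x \<in> s) = (y \<in> s)"
  shows "(x \<in> D) = (y \<in> D)"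
  using assms(1) by induction (use assms in auto)

lemma countable_separating:
  fixes M :: "'a measure"
  assumes diag: "{(x, x) | x. x \<in> space M} \<in> sets (M \<Otimes>\<^sub>M M)"
    and RS: "sigma_sets (space M) R = sets M"
  shows "\<exists>R0\<subseteq>R. countable R0 \<and> (\<forall>x\<in>space M. \<forall>y\<in>space M. x \<noteq> y \<longrightarrow> (\<exists>r\<in>R0. (x \<in> r) \<noteq> (y \<in> r)))"
proof -
  let ?\<Delta> = "{(x, x) | x. x \<in> space M}"
  have D1: "?\<Delta> \<in> sigma_sets (space M \<times> space M) {a \<times> b | a b. a \<in> sets M \<and> b \<in> sets M}"
    using diag unfolding sets_pair_measure .
  obtain G0 where G0: "G0 \<subseteq> {a \<times> b | a b. a \<in> sets M \<and> b \<in> sets M}" "countable G0"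
    "?\<Delta> \<in> sigma_sets (space M \<times> space M) G0"
    using sigma_sets_countable_gen[OF D1] by - (elim exE conjE, rule that)
  have ex: "\<exists>p. fst p \<times> snd p = g \<and> fst p \<in> sets M \<and> snd p \<in> sets M" if "g \<in> G0" for g
  proof -
    have "g \<in> {a \<times> b | a b. a \<in> sets M \<and> b \<in> sets M}" using G0(1) that by (rule subsetD)
    then obtain a b where "a \<times> b = g" "a \<in> sets M" "b \<in> sets M" by auto
    then show ?thesis by (intro exI[of _ "(a,b)"]) simp
  qed
  then have "\<forall>g\<in>G0. \<exists>p. fst p \<times> snd p = g \<and> fst p \<in> sets M \<and> snd p \<in> sets M" by blast
  from bchoice[OF this] obtain f where
    f: "\<forall>g\<in>G0. fst (f g) \<times> snd (f g) = g \<and> fst (f g) \<in> sets M \<and> snd (f g) \<in> sets M"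
    by - (erule exE, rule that)
  define fa where "fa g = fst (f g)" for g
  define fb where "fb g = snd (f g)" for g
  have fab: "fa g \<times> fb g = g \<and> fa g \<in> sets M \<and> fb g \<in> sets M" if "g \<in> G0" for g
    using f that unfolding fa_def fb_def by simp
  define C where "C = fa ` G0 \<union> fb ` G0"
  have Cc: "countable C" using G0(2) by (simp add: C_def)
  have CM: "C \<subseteq> sets M" using fab unfolding C_def by blast
  have "\<forall>c\<in>C. \<exists>Rc\<subseteq>R. countable Rc \<and> c \<in> sigma_sets (space M) Rc"
  proof
    fix c assume "c \<in> C"
    then have "c \<in> sigma_sets (space M) R" using CM RS by auto
    then show "\<exists>Rc\<subseteq>R. countable Rc \<and> c \<in> sigma_sets (space M) Rc" by (rule sigma_sets_countable_gen)
  qed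
  from bchoice[OF this] obtain Rc where Rc: "\<forall>c\<in>C. Rc c \<subseteq> R \<and> countable (Rc c) \<and> c \<in> sigma_sets (space M) (Rc c)"
    by - (erule exE, rule that)
  define R0 where "R0 = (\<Union>c\<in>C. Rc c)"
  have R0R: "R0 \<subseteq> R" using Rc by (auto simp: R0_def)
  have R0c: "countable R0" using Rc Cc by (auto simp: R0_def)
  have sepx: "\<exists>r\<in>R0. (x \<in> r) \<noteq> (y \<in> r)"
    if xy: "x \<in> space M" "y \<in> space M" "x \<noteq> y" for x y
  proof (rule ccontr)
    assume "\<not> (\<exists>r\<in>R0. (x \<in> r) \<noteq> (y \<in> r))"
    then have H: "\<forall>r\<in>R0. (x \<in> r) = (y \<in> r)" by blast
    have HC: "(x \<in> c) = (y \<in> c)" if c: "c \<in> C" for c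
    proof -
      have c1: "c \<in> sigma_sets (space M) (Rc c)" using Rc c by blast
      have "\<forall>s\<in>Rc c. (x \<in> s) = (y \<in> s)" using H c unfolding R0_def by blast
      then show ?thesis using sigma_sets_sep[OF c1 xy(1) xy(2)] by blast
    qed
    have HG: "\<forall>g\<in>G0. ((x,x) \<in> g) = ((x,y) \<in> g)"
    proof
      fix g assume g: "g \<in> G0"
      then have "fb g \<in> C" by (auto simp: C_def)
      then have "((x,x) \<in> fa g \<times> fb g) = ((x,y) \<in> fa g \<times> fb g)" using HC by auto
      then show "((x,x) \<in> g) = ((x,y) \<in> g)" using fab[OF g] by simp
    qed
    have p1: "(x,x) \<in> space M \<times> space M" "(x,y) \<in> space M \<times> space M" using xy by auto
    have "((x,x) \<in> ?\<Delta>) = ((x,y) \<in> ?\<Delta>)"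
      by (rule sigma_sets_sep[OF G0(3) p1 HG])
    moreover have "(x,x) \<in> ?\<Delta>" using xy by blast
    moreover have "(x,y) \<notin> ?\<Delta>" using xy by auto
    ultimately show False by blast
  qed
  show ?thesis
    by (rule exI[of _ R0]) (use R0R R0c sepx in blast)
qed



definition atom :: "'a set \<Rightarrow> ('a set \<times> bool) list \<Rightarrow> 'a set" where
  "atom B L = B \<inter> {x. \<forall>(r,b)\<in>set L. (x \<in> r) = b}"

lemma atom_in_ring:
  assumes "ring_of_sets \<Omega> R" "B \<in> R" "set L \<subseteq> R \<times> UNIV"
  shows "atom B L \<in> R"
  using assms(3)
proof (induction L)
  case Nil then show ?case using assms(2) by (simp add: atom_def)
next
  case (Cons a L)
  obtain r b where a: "a = (r, b)" by force
  have r: "r \<in> R" using Cons.prems a by auto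
  have IH: "atom B L \<in> R" using Cons by auto
  have eq: "atom B (a # L) = (if b then atom B L \<inter> r else atom B L - r)"
    unfolding a atom_def by auto
  show ?case unfolding eq using IH r assms(1)
    by (auto intro: ring_of_sets.Diff semiring_of_sets.Int simp: ring_of_sets_def)
qed

lemma count_char:
  assumes sep: "\<forall>x\<in>B. \<forall>y\<in>B. x \<noteq> y \<longrightarrow> (\<exists>r\<in>R0. (x \<in> r) \<noteq> (y \<in> r))"
  shows "enat k \<le> cnt_N B X \<longleftrightarrow> (\<exists>Ls. length Ls = k \<and> (\<forall>L\<in>set Ls. set L \<subseteq> R0 \<times> UNIV) \<and>
     (\<forall>i<k. \<forall>j<k. i \<noteq> j \<longrightarrow> atom B (Ls!i) \<inter> atom B (Ls!j) = {}) \<and> (\<forall>j<k. X \<inter> atom B (Ls!j) \<noteq> {}))"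
    (is "?L \<longleftrightarrow> ?R")
proof
  assume ?R
  then obtain Ls where Ls: "length Ls = k" "\<forall>i<k. \<forall>j<k. i \<noteq> j \<longrightarrow> atom B (Ls!i) \<inter> atom B (Ls!j) = {}"
    "\<forall>j<k. X \<inter> atom B (Ls!j) \<noteq> {}" by blast
  have "\<forall>j<k. \<exists>p. p \<in> X \<inter> atom B (Ls!j)" using Ls(3) by blast
  then obtain p where p: "\<And>j. j < k \<Longrightarrow> p j \<in> X \<inter> atom B (Ls!j)" by metis
  have inj: "inj_on p {..<k}"
  proof (rule inj_onI)
    fix i j assume "i \<in> {..<k}" "j \<in> {..<k}" "p i = p j"
    then show "i = j" using p[of i] p[of j] Ls(2) by auto
  qed
  have sub: "p ` {..<k} \<subseteq> B \<inter> X" using p by (auto simp: atom_def)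
  show ?L
  proof (cases "finite (B \<inter> X)")
    case True
    have "card (p ` {..<k}) \<le> card (B \<inter> X)" using card_mono[OF True sub] .
    then have "k \<le> card (B \<inter> X)" using card_image[OF inj] by simp
    then show ?thesis using True by (simp add: cnt_N_def)
  next
    case False then show ?thesis by (simp add: cnt_N_def)
  qed
next
  assume L: ?L
  obtain F where F: "F \<subseteq> B \<inter> X" "finite F" "card F = k"
  proof (cases "finite (B \<inter> X)")
    case True
    then have "k \<le> card (B \<inter> X)" using L by (simp add: cnt_N_def)
    then show ?thesis using that obtain_subset_with_card_n by metis
  next
    case False
    then show ?thesis using that infinite_arbitrarily_large by metis
  qed
  obtain ps where ps: "set ps = F" "distinct ps" using finite_distinct_list[OF F(2)] by blast
  have lps: "length ps = k" using ps F(3) distinct_card by fastforce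
  define s where "s x y = (SOME r. r \<in> R0 \<and> (x \<in> r) \<noteq> (y \<in> r))" for x y
  have s: "s x y \<in> R0 \<and> (x \<in> s x y) \<noteq> (y \<in> s x y)" if "x \<in> B" "y \<in> B" "x \<noteq> y" for x y
  proof -
    have "\<exists>r. r \<in> R0 \<and> (x \<in> r) \<noteq> (y \<in> r)" using sep that by blast
    then show ?thesis unfolding s_def by (rule someI_ex)
  qed
  have fin: "finite ((\<lambda>(x,y). s x y) ` {(x,y) \<in> F \<times> F. x \<noteq> y})"
  proof -
    have "{(x,y) \<in> F \<times> F. x \<noteq> y} \<subseteq> F \<times> F" by blast
    then have "finite {(x,y) \<in> F \<times> F. x \<noteq> y}" using finite_subset F(2) by blast
    then show ?thesis by (rule finite_imageI)
  qed
  then obtain rs where rs: "set rs = (\<lambda>(x,y). s x y) ` {(x,y) \<in> F \<times> F. x \<noteq> y}"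
    using finite_list[OF fin] by blast
  define Ls where "Ls = map (\<lambda>p. map (\<lambda>r. (r, p \<in> r)) rs) ps"
  have mem: "x \<in> atom B (Ls!j) \<longleftrightarrow> x \<in> B \<and> (\<forall>r\<in>set rs. (x \<in> r) = (ps!j \<in> r))" if "j < k" for x j
    using that lps by (auto simp: Ls_def atom_def)
  have psB: "ps!j \<in> B \<inter> X" if "j < k" for j
    using that lps ps(1) F(1) nth_mem by blast
  have l1: "length Ls = k" using lps by (simp add: Ls_def)
  have l2: "\<forall>L\<in>set Ls. set L \<subseteq> R0 \<times> UNIV"
    using s F(1) by (auto simp: Ls_def rs)
  have l3: "\<forall>i<k. \<forall>j<k. i \<noteq> j \<longrightarrow> atom B (Ls!i) \<inter> atom B (Ls!j) = {}"
  proof (intro allI impI)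
    fix i j assume ij: "i < k" "j < k" "i \<noteq> j"
    have ne: "ps!i \<noteq> ps!j" using ij lps ps(2) nth_eq_iff_index_eq by metis
    have inF: "ps!i \<in> F" "ps!j \<in> F" using ij lps ps(1) nth_mem by auto
    then have sin: "s (ps!i) (ps!j) \<in> set rs" using ne by (auto simp: rs)
    have sp: "(ps!i \<in> s (ps!i) (ps!j)) \<noteq> (ps!j \<in> s (ps!i) (ps!j))"
      using s inF F(1) ne by auto
    show "atom B (Ls!i) \<inter> atom B (Ls!j) = {}"
      using mem[OF ij(1)] mem[OF ij(2)] sin sp by blast
  qed
  have l4: "\<forall>j<k. X \<inter> atom B (Ls!j) \<noteq> {}"
  proof (intro allI impI)
    fix j assume j: "j < k"
    then have "ps!j \<in> X \<inter> atom B (Ls!j)" using mem[OF j] psB[OF j] by auto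
    then show "X \<inter> atom B (Ls!j) \<noteq> {}" by blast
  qed
  show ?R by (rule exI[of _ Ls], intro conjI l1 l2 l3 l4)
qed


definition gv :: "enat \<Rightarrow> ennreal" where
  "gv v = (case v of enat n \<Rightarrow> of_nat n | \<infinity> \<Rightarrow> \<infinity>)"

lemma gv_inj: "gv u = gv v \<longleftrightarrow> u = v"
  by (cases u; cases v) (auto simp: gv_def)

lemma hh_gv: "emeasure (count_space UNIV) (X \<inter> A) = gv (cnt_N A X)"
proof (cases "finite (A \<inter> X)")
  case True
  then have "finite (X \<inter> A)" by (simp add: Int_commute)
  then show ?thesis using True by (simp add: cnt_N_def gv_def Int_commute)
next
  case False
  then have "infinite (X \<inter> A)" by (simp add: Int_commute)
  then show ?thesis using False by (simp add: cnt_N_def gv_def)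
qed

lemma enat_ge_eq: "(enat k \<le> x \<and> \<not> enat (Suc k) \<le> x) \<longleftrightarrow> x = enat k"
  by (cases x) auto

lemma enat_all_ge: "(\<forall>k. enat k \<le> x) \<longleftrightarrow> x = \<infinity>"
proof (cases x)
  case (enat n)
  then show ?thesis by (auto intro!: exI[of _ "Suc n"])
qed simp


theorem theorem1p3:
  fixes M :: "'a measure" and P :: "'b measure" and R :: "'a set set"
    and \<pi>1 \<pi>2 :: "'b \<Rightarrow> 'a set"
  assumes "prob_space P"
    and "{(x, x) | x. x \<in> space M} \<in> sets (M \<Otimes>\<^sub>M M)"
    and "ring_of_sets (space M) R"
    and "sigma_sets (space M) R = sets M"
    and "\<pi>1 \<in> P \<rightarrow>\<^sub>M cr_space M"
    and "\<pi>2 \<in> P \<rightarrow>\<^sub>M cr_space M"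
    and "\<And>A. A \<in> R \<Longrightarrow>
           measure P {\<omega> \<in> space P. \<pi>1 \<omega> \<inter> A \<noteq> {}} = measure P {\<omega> \<in> space P. \<pi>2 \<omega> \<inter> A \<noteq> {}}"
    and "cr_sigma_finite_on M (space P) \<pi>1 R"
  shows "distr P (cr_space M) \<pi>1 = distr P (cr_space M) \<pi>2"
proof -
  note prob = assms(1) and diag = assms(2) and ring = assms(3) and RS = assms(4)
    and m1 = assms(5) and m2 = assms(6) and eqR = assms(7) and sf = assms(8)
  define \<Omega> where "\<Omega> = space M"
  define CS where "CS = cnt_sets M"
  define E0 where "E0 = {{X \<in> CS. X \<inter> A = {}} | A. A \<in> R}"
  define Gm where "Gm = sigma CS E0"
  define gens where "gens = {{X \<in> cnt_sets M. cnt_N A X \<in> B} | A B. A \<in> sets M}"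
  have RPow: "R \<subseteq> Pow \<Omega>" using ring unfolding \<Omega>_def ring_of_sets_def semiring_of_sets_def subset_class_def by blast
  have RM: "R \<subseteq> sets M" using RS by auto
  have Rempty: "{} \<in> R" using ring unfolding ring_of_sets_def semiring_of_sets_def semiring_of_sets_axioms_def by blast
  have RInt: "a \<inter> b \<in> R" if "a \<in> R" "b \<in> R" for a b
    using ring that unfolding ring_of_sets_def semiring_of_sets_def semiring_of_sets_axioms_def by blast
  have RUn: "a \<union> b \<in> R" if "a \<in> R" "b \<in> R" for a b
    using ring that unfolding ring_of_sets_def ring_of_sets_axioms_def by blast
  have XCS: "X \<subseteq> \<Omega>" if "X \<in> CS" for X using that by (simp add: CS_def cnt_sets_def \<Omega>_def)
  have E0Pow: "E0 \<subseteq> Pow CS" unfolding E0_def by blast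
  have spG: "space Gm = CS" unfolding Gm_def by (simp add: space_measure_of_conv)
  have setsG: "sets Gm = sigma_sets CS E0" unfolding Gm_def using E0Pow by (simp add: sets_measure_of)
  have gensPow: "gens \<subseteq> Pow CS" unfolding gens_def CS_def by blast
  have spC: "space (cr_space M) = CS" unfolding cr_space_def CS_def by (simp add: space_measure_of_conv)
  have setsC: "sets (cr_space M) = sigma_sets CS gens"
    unfolding cr_space_def using gensPow by (simp add: sets_measure_of CS_def gens_def)
  have avoidG: "{X \<in> CS. X \<inter> A = {}} \<in> sets Gm" if "A \<in> R" for A
    unfolding setsG E0_def using that by (intro sigma_sets.Basic) blast
  have hitG: "{X \<in> space Gm. X \<inter> A \<noteq> {}} \<in> sets Gm" if "A \<in> R" for A
  proof -
    have "{X \<in> space Gm. X \<inter> A \<noteq> {}} = space Gm - {X \<in> CS. X \<inter> A = {}}" using spG by auto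
    then show ?thesis using avoidG[OF that] by auto
  qed
  obtain R0 where R0: "R0 \<subseteq> R" "countable R0"
    and sep: "\<forall>x\<in>space M. \<forall>y\<in>space M. x \<noteq> y \<longrightarrow> (\<exists>r\<in>R0. (x \<in> r) \<noteq> (y \<in> r))"
    using countable_separating[OF diag RS] by - (elim exE conjE, rule that)
  have geG: "{X \<in> space Gm. enat k \<le> cnt_N B X} \<in> sets Gm" if B: "B \<in> R" for B k
  proof -
    have sepB: "\<forall>x\<in>B. \<forall>y\<in>B. x \<noteq> y \<longrightarrow> (\<exists>r\<in>R0. (x \<in> r) \<noteq> (y \<in> r))"
      using sep RPow B unfolding \<Omega>_def by blast
    define LS where "LS = {Ls. length Ls = k \<and> (\<forall>L\<in>set Ls. set L \<subseteq> R0 \<times> UNIV) \<and>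
       (\<forall>i<k. \<forall>j<k. i \<noteq> j \<longrightarrow> atom B (Ls!i) \<inter> atom B (Ls!j) = {})}"
    have LSc: "countable LS"
    proof (rule countable_subset)
      show "LS \<subseteq> lists (lists (R0 \<times> UNIV))" unfolding LS_def by auto
      show "countable (lists (lists (R0 \<times> (UNIV :: bool set))))" using R0(2) by auto
    qed
    have eq: "{X \<in> space Gm. enat k \<le> cnt_N B X} =
       {X \<in> space Gm. \<exists>Ls\<in>LS. \<forall>j\<in>{..<k}. X \<inter> atom B (Ls!j) \<noteq> {}}"
      unfolding count_char[OF sepB] LS_def by auto
    have inner: "{X \<in> space Gm. \<forall>j\<in>{..<k}. X \<inter> atom B (Ls!j) \<noteq> {}} \<in> sets Gm" if Ls: "Ls \<in> LS" for Ls
    proof (rule sets.sets_Collect_countable_All')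
      fix j assume j: "j \<in> {..<k}"
      have "set (Ls!j) \<subseteq> R0 \<times> UNIV" using Ls j unfolding LS_def by auto
      then have "set (Ls!j) \<subseteq> R \<times> UNIV" using R0(1) by auto
      then have "atom B (Ls!j) \<in> R" by (rule atom_in_ring[OF ring B])
      then show "{X \<in> space Gm. X \<inter> atom B (Ls!j) \<noteq> {}} \<in> sets Gm" by (rule hitG)
    qed simp
    show ?thesis unfolding eq
      by (rule sets.sets_Collect_countable_Ex'[OF inner LSc])
  qed
  have NmeasG: "cnt_N B \<in> Gm \<rightarrow>\<^sub>M count_space UNIV" if B: "B \<in> R" for B
  proof -
    have "cnt_N B -` {v} \<inter> space Gm \<in> sets Gm" for v
    proof (cases v)
      case (enat k)
      have "cnt_N B -` {v} \<inter> space Gm = {X \<in> space Gm. enat k \<le> cnt_N B X} - {X \<in> space Gm. enat (Suc k) \<le> cnt_N B X}"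
        using enat_ge_eq[of k] enat by auto
      then show ?thesis using geG[OF B] by auto
    next
      case infinity
      have "cnt_N B -` {v} \<inter> space Gm = {X \<in> space Gm. \<forall>k. enat k \<le> cnt_N B X}"
        using enat_all_ge infinity by auto
      then show ?thesis using geG[OF B] by (auto intro: sets.sets_Collect_countable_All)
    qed
    then show ?thesis by (subst measurable_count_space_eq_countable) auto
  qed
  define hh where "hh S = emeasure (count_space UNIV) S" for S :: "'a set"
  have hhmeas: "(\<lambda>X. hh (X \<inter> B)) \<in> borel_measurable Gm" if B: "B \<in> R" for B
  proof -
    have "(\<lambda>X. gv (cnt_N B X)) \<in> borel_measurable Gm"
      by (rule measurable_compose[OF NmeasG[OF B]]) simp
    then show ?thesis unfolding hh_def hh_gv .
  qed
  from sf obtain An :: "nat \<Rightarrow> 'a set" where An0: "range An \<subseteq> R \<and> space M = (\<Union>n. An n) \<and>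
    (\<forall>\<omega>\<in>space P. \<forall>n. finite (\<pi>1 \<omega> \<inter> An n))"
    unfolding cr_sigma_finite_on_def by (rule exE) (rule that, assumption)
  have An: "range An \<subseteq> R" "space M = (\<Union>n. An n)" "\<forall>\<omega>\<in>space P. \<forall>n. finite (\<pi>1 \<omega> \<inter> An n)"
    using An0 by auto
  define D where "D = disjointed An"
  have DR: "D n \<in> R" for n
    using ring_of_sets.range_disjointed_sets[OF ring An(1)] unfolding D_def by blast
  have Ddisj: "disjoint_family D" unfolding D_def by (rule disjoint_family_disjointed)
  have DUN: "(\<Union>n. D n) = \<Omega>" unfolding D_def UN_disjointed_eq \<Omega>_def using An(2) by simp
  have DO: "D n \<subseteq> \<Omega>" for n using DR RPow by blast
  define F0 where "F0 = {X \<in> CS. \<forall>n. finite (X \<inter> D n)}"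
  have F0G: "F0 \<in> sets Gm"
  proof -
    have "{X \<in> space Gm. finite (X \<inter> D n)} \<in> sets Gm" for n
    proof -
      have "{X \<in> space Gm. finite (X \<inter> D n)} = space Gm - (cnt_N (D n) -` {\<infinity>} \<inter> space Gm)"
        by (auto simp: cnt_N_def Int_commute)
      moreover have "cnt_N (D n) -` {\<infinity>} \<inter> space Gm \<in> sets Gm"
        using measurable_sets[OF NmeasG[OF DR[of n]], of "{\<infinity>}"] by simp
      ultimately show ?thesis by auto
    qed
    then have "{X \<in> space Gm. \<forall>n. finite (X \<inter> D n)} \<in> sets Gm"
      by (rule sets.sets_Collect_countable_All)
    then show ?thesis unfolding F0_def spG .
  qed
  have IntR: "Int_stable R" by (rule Int_stableI) (rule RInt)
  have dyn: "\<exists>f. f \<in> borel_measurable Gm \<and> (\<forall>X\<in>F0. hh (X \<inter> A \<inter> D n) = f X)"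
    if A: "A \<in> sigma_sets \<Omega> R" for A n
    using IntR RPow A
  proof (induction A rule: sigma_sets_induct_disjoint)
    case (basic A)
    have "A \<inter> D n \<in> R" using basic DR RInt by blast
    then show ?case
      by (intro exI[of _ "\<lambda>X. hh (X \<inter> (A \<inter> D n))"] conjI hhmeas) (auto simp: Int_assoc)
  next
    case empty
    then show ?case by (intro exI[of _ "\<lambda>X. 0"]) (simp add: hh_def)
  next
    case (compl A)
    then obtain f where f: "f \<in> borel_measurable Gm" "\<forall>X\<in>F0. hh (X \<inter> A \<inter> D n) = f X" by blast
    have m1: "(\<lambda>X. hh (X \<inter> D n)) \<in> borel_measurable Gm" by (rule hhmeas[OF DR])
    have "(\<lambda>X. hh (X \<inter> D n) - f X) \<in> borel_measurable Gm" using m1 f(1) by measurable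
    moreover have "hh (X \<inter> (\<Omega> - A) \<inter> D n) = hh (X \<inter> D n) - f X" if X: "X \<in> F0" for X
    proof -
      have fin: "finite (X \<inter> D n)" using X by (auto simp: F0_def)
      have "X \<inter> (\<Omega> - A) \<inter> D n = (X \<inter> D n) - (X \<inter> A \<inter> D n)" using DO by blast
      moreover have "hh ((X \<inter> D n) - (X \<inter> A \<inter> D n)) = hh (X \<inter> D n) - hh (X \<inter> A \<inter> D n)"
        unfolding hh_def
      proof (rule emeasure_Diff)
        have "finite (X \<inter> A \<inter> D n)" using fin by (rule finite_subset[rotated]) blast
        then show "emeasure (count_space UNIV) (X \<inter> A \<inter> D n) \<noteq> \<infinity>" by simp
      qed auto
      ultimately show ?thesis using f(2) X by simp
    qed
    ultimately show ?case by blast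
  next
    case (union A)
    then have "\<forall>i. \<exists>f. f \<in> borel_measurable Gm \<and> (\<forall>X\<in>F0. hh (X \<inter> A i \<inter> D n) = f X)" by blast
    then obtain fs where fs: "\<And>i. fs i \<in> borel_measurable Gm" "\<And>i. \<forall>X\<in>F0. hh (X \<inter> A i \<inter> D n) = fs i X"
      by metis
    have "(\<lambda>X. \<Sum>i. fs i X) \<in> borel_measurable Gm"
      by (rule borel_measurable_suminf_order) (rule fs(1))
    moreover have "hh (X \<inter> (\<Union>i. A i) \<inter> D n) = (\<Sum>i. fs i X)" if X: "X \<in> F0" for X
    proof -
      have "X \<inter> (\<Union>i. A i) \<inter> D n = (\<Union>i. X \<inter> A i \<inter> D n)" by blast
      moreover have "disjoint_family (\<lambda>i. X \<inter> A i \<inter> D n)"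
        using union(1) unfolding disjoint_family_on_def by blast
      then have "(\<Sum>i. hh (X \<inter> A i \<inter> D n)) = hh (\<Union>i. X \<inter> A i \<inter> D n)"
        unfolding hh_def by (intro suminf_emeasure) auto
      ultimately show ?thesis using fs(2) X by simp
    qed
    ultimately show ?case by blast
  qed
  have fullA: "\<exists>f. f \<in> borel_measurable Gm \<and> (\<forall>X\<in>F0. hh (X \<inter> A) = f X)"
    if A: "A \<in> sets M" for A
  proof -
    have A': "A \<in> sigma_sets \<Omega> R" using A RS unfolding \<Omega>_def by simp
    have "\<forall>n. \<exists>f. f \<in> borel_measurable Gm \<and> (\<forall>X\<in>F0. hh (X \<inter> A \<inter> D n) = f X)"
      using dyn[OF A'] by blast
    then obtain fs where fs: "\<And>n. fs n \<in> borel_measurable Gm" "\<And>n. \<forall>X\<in>F0. hh (X \<inter> A \<inter> D n) = fs n X"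
      by metis
    have "(\<lambda>X. \<Sum>n. fs n X) \<in> borel_measurable Gm"
      by (rule borel_measurable_suminf_order) (rule fs(1))
    moreover have "hh (X \<inter> A) = (\<Sum>n. fs n X)" if X: "X \<in> F0" for X
    proof -
      have "X \<subseteq> \<Omega>" using X XCS by (auto simp: F0_def)
      then have "X \<inter> A = (\<Union>n. X \<inter> A \<inter> D n)" using DUN by blast
      moreover have "disjoint_family (\<lambda>n. X \<inter> A \<inter> D n)"
        using Ddisj unfolding disjoint_family_on_def by blast
      then have "(\<Sum>n. hh (X \<inter> A \<inter> D n)) = hh (\<Union>n. X \<inter> A \<inter> D n)"
        unfolding hh_def by (intro suminf_emeasure) auto
      ultimately show ?thesis using fs(2) X by simp
    qed
    ultimately show ?thesis by blast
  qed
  have genF0: "G \<inter> F0 \<in> sets Gm" if G: "G \<in> gens" for G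
  proof -
    obtain A Bv where AB: "A \<in> sets M" "G = {X \<in> cnt_sets M. cnt_N A X \<in> Bv}"
      using G unfolding gens_def by blast
    obtain f where f: "f \<in> borel_measurable Gm" "\<forall>X\<in>F0. hh (X \<inter> A) = f X"
      using fullA[OF AB(1)] by blast
    have "G \<inter> F0 = {X \<in> space Gm. X \<in> F0 \<and> (\<exists>v\<in>Bv. X \<in> f -` {gv v} \<inter> space Gm)}"
    proof -
      have "cnt_N A X \<in> Bv \<longleftrightarrow> (\<exists>v\<in>Bv. f X = gv v)" if "X \<in> F0" for X
        using f(2) that gv_inj unfolding hh_def hh_gv by metis
      then show ?thesis unfolding AB(2) spG F0_def CS_def by auto
    qed
    also have "\<dots> \<in> sets Gm"
    proof (rule sets.sets_Collect_conj)
      show "{X \<in> space Gm. X \<in> F0} \<in> sets Gm" using F0G by (simp add: spG F0_def CS_def Collect_conj_eq Int_absorb1)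
      show "{X \<in> space Gm. \<exists>v\<in>Bv. X \<in> f -` {gv v} \<inter> space Gm} \<in> sets Gm"
      proof (rule sets.sets_Collect_countable_Ex')
        fix v
        have mem: "f -` {gv v} \<inter> space Gm \<in> sets Gm" using measurable_sets[OF f(1)] by simp
        have eq: "{X \<in> space Gm. X \<in> f -` {gv v} \<inter> space Gm} = f -` {gv v} \<inter> space Gm" by blast
        show "{X \<in> space Gm. X \<in> f -` {gv v} \<inter> space Gm} \<in> sets Gm" by (subst eq) (rule mem)
      qed simp
    qed
    finally show ?thesis .
  qed
  have traceF0: "E \<inter> F0 \<in> sets Gm" if E: "E \<in> sets (cr_space M)" for E
  proof -
    have "E \<in> sigma_sets CS gens" using E setsC by simp
    then show ?thesis
    proof induction
      case (Basic a) then show ?case by (rule genF0)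
    next
      case Empty then show ?case by simp
    next
      case (Compl a)
      have "(CS - a) \<inter> F0 = F0 - (a \<inter> F0)" unfolding F0_def by blast
      then show ?case using Compl F0G by auto
    next
      case (Union a)
      have eq: "(\<Union>i. a i) \<inter> F0 = (\<Union>i. a i \<inter> F0)" by blast
      have "(\<Union>i. a i \<inter> F0) \<in> sets Gm" using Union(2) by (intro sets.countable_UN) auto
      then show ?case by (subst eq)
    qed
  qed
  interpret P: prob_space P by (rule prob)
  have E0C: "E0 \<subseteq> sets (cr_space M)"
  proof
    fix S assume "S \<in> E0"
    then obtain A where A: "A \<in> R" "S = {X \<in> CS. X \<inter> A = {}}" unfolding E0_def by blast
    have "S = {X \<in> cnt_sets M. cnt_N A X \<in> {enat 0}}"
    proof -
      have "cnt_N A X \<in> {enat 0} \<longleftrightarrow> X \<inter> A = {}" for X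
        by (cases "finite (A \<inter> X)") (auto simp: cnt_N_def Int_commute)
      then show ?thesis using A(2) by (simp add: CS_def)
    qed
    moreover have "A \<in> sets M" using A(1) RM by blast
    ultimately have "S \<in> gens" unfolding gens_def by blast
    then show "S \<in> sets (cr_space M)" unfolding setsC by (rule sigma_sets.Basic)
  qed
  have measG: "\<pi> \<in> P \<rightarrow>\<^sub>M Gm" if m: "\<pi> \<in> P \<rightarrow>\<^sub>M cr_space M" for \<pi>
    unfolding Gm_def
  proof (rule measurable_measure_of[OF E0Pow])
    show "\<pi> \<in> space P \<rightarrow> CS" using measurable_space[OF m] spC by auto
    show "\<pi> -` y \<inter> space P \<in> sets P" if "y \<in> E0" for y
      using measurable_sets[OF m] E0C that by blast
  qed
  have inCS: "\<pi> \<omega> \<in> CS" if "\<pi> \<in> P \<rightarrow>\<^sub>M cr_space M" "\<omega> \<in> space P" for \<pi> \<omega>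
    using measurable_space[OF that] spC by auto
  have IntE0: "Int_stable E0"
  proof (rule Int_stableI)
    fix a b assume "a \<in> E0" "b \<in> E0"
    then obtain A B where AB: "A \<in> R" "B \<in> R" "a = {X \<in> CS. X \<inter> A = {}}" "b = {X \<in> CS. X \<inter> B = {}}"
      unfolding E0_def by blast
    have "a \<inter> b = {X \<in> CS. X \<inter> (A \<union> B) = {}}" using AB by auto
    then show "a \<inter> b \<in> E0" unfolding E0_def using RUn[OF AB(1,2)] by blast
  qed
  have eqG: "distr P Gm \<pi>1 = distr P Gm \<pi>2"
  proof (rule measure_eqI_generator_eq[OF IntE0 E0Pow, of _ _ "\<lambda>i. CS"])
    fix S assume "S \<in> E0"
    then obtain A where A: "A \<in> R" "S = {X \<in> CS. X \<inter> A = {}}" unfolding E0_def by blast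
    have SG: "S \<in> sets Gm" using A avoidG by simp
    have hitP: "{\<omega> \<in> space P. \<pi> \<omega> \<inter> A \<noteq> {}} \<in> sets P" if m: "\<pi> \<in> P \<rightarrow>\<^sub>M cr_space M" for \<pi>
    proof -
      have "{\<omega> \<in> space P. \<pi> \<omega> \<inter> A \<noteq> {}} = \<pi> -` {X \<in> space Gm. X \<inter> A \<noteq> {}} \<inter> space P"
        using inCS[OF m] spG by auto
      then show ?thesis using measurable_sets[OF measG[OF m] hitG[OF A(1)]] by simp
    qed
    have val: "emeasure (distr P Gm \<pi>) S = ennreal (1 - measure P {\<omega> \<in> space P. \<pi> \<omega> \<inter> A \<noteq> {}})"
      if m: "\<pi> \<in> P \<rightarrow>\<^sub>M cr_space M" for \<pi>
    proof -
      have "\<pi> -` S \<inter> space P = space P - {\<omega> \<in> space P. \<pi> \<omega> \<inter> A \<noteq> {}}"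
        using inCS[OF m] A(2) by auto
      then have "emeasure (distr P Gm \<pi>) S = emeasure P (space P - {\<omega> \<in> space P. \<pi> \<omega> \<inter> A \<noteq> {}})"
        using emeasure_distr[OF measG[OF m] SG] by simp
      also have "\<dots> = ennreal (1 - measure P {\<omega> \<in> space P. \<pi> \<omega> \<inter> A \<noteq> {}})"
        using P.prob_compl[OF hitP[OF m]] P.emeasure_eq_measure by simp
      finally show ?thesis .
    qed
    show "emeasure (distr P Gm \<pi>1) S = emeasure (distr P Gm \<pi>2) S"
      using val[OF m1] val[OF m2] eqR[OF A(1)] by simp
  next
    show "sets (distr P Gm \<pi>1) = sigma_sets CS E0" using setsG by simp
    show "sets (distr P Gm \<pi>2) = sigma_sets CS E0" using setsG by simp
    have "CS = {X \<in> CS. X \<inter> {} = {}}" by simp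
    then have "CS \<in> E0" unfolding E0_def using Rempty by blast
    then show "range (\<lambda>i. CS) \<subseteq> E0" by blast
    show "(\<Union>i. CS) = CS" by simp
    show "emeasure (distr P Gm \<pi>1) CS \<noteq> \<infinity>" for i
    proof -
      have "CS \<in> sets Gm" using sets.top[of Gm] spG by simp
      then show ?thesis using emeasure_distr[OF measG[OF m1], of CS] P.emeasure_finite by simp
    qed
  qed
  have F0\<pi>1: "\<pi>1 \<omega> \<in> F0" if "\<omega> \<in> space P" for \<omega>
  proof -
    have "finite (\<pi>1 \<omega> \<inter> D n)" for n
    proof -
      have "\<pi>1 \<omega> \<inter> D n \<subseteq> \<pi>1 \<omega> \<inter> An n" using disjointed_subset[of An n] unfolding D_def by blast
      then show ?thesis using An(3) that finite_subset by blast
    qed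
    then show ?thesis using inCS[OF m1 that] unfolding F0_def by blast
  qed
  have CF0G: "CS - F0 \<in> sets Gm" using F0G spG sets.compl_sets[of F0 Gm] by simp
  have null2: "\<pi>2 -` (CS - F0) \<inter> space P \<in> null_sets P"
  proof -
    have "emeasure P (\<pi>2 -` (CS - F0) \<inter> space P) = emeasure (distr P Gm \<pi>2) (CS - F0)"
      using emeasure_distr[OF measG[OF m2] CF0G] by simp
    also have "\<dots> = emeasure (distr P Gm \<pi>1) (CS - F0)" using eqG by simp
    also have "\<dots> = emeasure P (\<pi>1 -` (CS - F0) \<inter> space P)"
      using emeasure_distr[OF measG[OF m1] CF0G] by simp
    also have "\<pi>1 -` (CS - F0) \<inter> space P = {}" using F0\<pi>1 by blast
    finally have "emeasure P (\<pi>2 -` (CS - F0) \<inter> space P) = 0" by simp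
    moreover have "\<pi>2 -` (CS - F0) \<inter> space P \<in> sets P" using measurable_sets[OF measG[OF m2] CF0G] .
    ultimately show ?thesis by blast
  qed
  show ?thesis
  proof (rule measure_eqI)
    show "sets (distr P (cr_space M) \<pi>1) = sets (distr P (cr_space M) \<pi>2)" by simp
    fix E assume "E \<in> sets (distr P (cr_space M) \<pi>1)"
    then have E: "E \<in> sets (cr_space M)" by simp
    have EF: "E \<inter> F0 \<in> sets Gm" by (rule traceF0[OF E])
    have "emeasure (distr P (cr_space M) \<pi>1) E = emeasure P (\<pi>1 -` E \<inter> space P)"
      by (rule emeasure_distr[OF m1 E])
    also have "\<pi>1 -` E \<inter> space P = \<pi>1 -` (E \<inter> F0) \<inter> space P" using F0\<pi>1 by blast
    also have "emeasure P \<dots> = emeasure (distr P Gm \<pi>1) (E \<inter> F0)"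
      by (rule emeasure_distr[OF measG[OF m1] EF, symmetric])
    also have "\<dots> = emeasure (distr P Gm \<pi>2) (E \<inter> F0)" using eqG by simp
    also have "\<dots> = emeasure P (\<pi>2 -` (E \<inter> F0) \<inter> space P)"
      by (rule emeasure_distr[OF measG[OF m2] EF])
    also have "\<pi>2 -` (E \<inter> F0) \<inter> space P = (\<pi>2 -` E \<inter> space P) - (\<pi>2 -` (CS - F0) \<inter> space P)"
      using inCS[OF m2] by blast
    also have "emeasure P \<dots> = emeasure P (\<pi>2 -` E \<inter> space P)"
      by (rule emeasure_Diff_null_set[OF null2 measurable_sets[OF m2 E]])
    also have "\<dots> = emeasure (distr P (cr_space M) \<pi>2) E"
      by (rule emeasure_distr[OF m2 E, symmetric])
    finally show "emeasure (distr P (cr_space M) \<pi>1) E = emeasure (distr P (cr_space M) \<pi>2) E" .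
  qed
qed

end
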